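(* Let $\mathcal G$ be a molecular graph and let $\mathcal S$ be a subset of its molecules such that the subgraph of $\mathcal G$ induced on $\mathcal S$ is doubly connected. Let $\mathcal G/\mathcal S$ be the quotient graph obtained from $\mathcal G$ by replacing all molecules of $\mathcal S$ by a single new molecule, deleting all edges with both endpoints in $\mathcal S$, and reattaching every edge of $\mathcal G$ joining a molecule of $\mathcal S$ to a molecule outside $\mathcal S$ to this new molecule (keeping its type). Then $\mathcal G$ is doubly connected if and only if $\mathcal G/\mathcal S$ is doubly connected.
   Context: A molecular graph is a finite multigraph whose vertices are called molecules and each of whose edges joins two distinct molecules and is either a diffusive edge or a blue solid edge (parallel edges are allowed). A molecular graph is doubly connected if there exist two disjoint sets of edges, $\mathcal B_{black}$ consisting only of diffusive edges and $\mathcal B_{blue}$ consisting only of blue solid or diffusive edges, such that each of $\mathcal B_{black}$ and $\mathcal B_{blue}$ contains a spanning tree of the set of all molecules. The subgraph induced on a set $\mathcal S$ of molecules consists of the molecules in $\mathcal S$ and all edges with both endpoints in $\mathcal S$. *)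

theory Defs
  imports Main
begin

text \<open>Molecular graphs: a finite set V of molecules, a finite set E of edge
identifiers (so parallel edges are allowed), an endpoint map ends assigning to
each edge the two-element set of molecules it joins, and a map kind giving the
type of each edge.\<close>

datatype edge_kind = Diffusive | BlueSolid

definition molecular_graph :: "'v set \<Rightarrow> 'e set \<Rightarrow> ('e \<Rightarrow> 'v set) \<Rightarrow> bool" where
  "molecular_graph V E ends \<longleftrightarrow> finite V \<and> finite E \<and>
     (\<forall>e\<in>E. ends e \<subseteq> V \<and> card (ends e) = 2)"

definition adj :: "('e \<Rightarrow> 'v set) \<Rightarrow> 'e set \<Rightarrow> ('v \<times> 'v) set" where
  "adj ends T = {(x, y). \<exists>e\<in>T. ends e = {x, y}}"

definition connected_by :: "'v set \<Rightarrow> ('e \<Rightarrow> 'v set) \<Rightarrow> 'e set \<Rightarrow> bool" where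
  "connected_by V ends T \<longleftrightarrow> (\<forall>u\<in>V. \<forall>v\<in>V. (u, v) \<in> (adj ends T)\<^sup>*)"

definition spanning_tree :: "'v set \<Rightarrow> ('e \<Rightarrow> 'v set) \<Rightarrow> 'e set \<Rightarrow> bool" where
  "spanning_tree V ends T \<longleftrightarrow> (\<forall>e\<in>T. ends e \<subseteq> V) \<and> connected_by V ends T \<and>
     (\<forall>e\<in>T. \<not> connected_by V ends (T - {e}))"

definition contains_spanning_tree :: "'v set \<Rightarrow> ('e \<Rightarrow> 'v set) \<Rightarrow> 'e set \<Rightarrow> bool" where
  "contains_spanning_tree V ends B \<longleftrightarrow> (\<exists>T\<subseteq>B. spanning_tree V ends T)"

definition doubly_connected ::
  "'v set \<Rightarrow> 'e set \<Rightarrow> ('e \<Rightarrow> 'v set) \<Rightarrow> ('e \<Rightarrow> edge_kind) \<Rightarrow> bool" where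
  "doubly_connected V E ends kind \<longleftrightarrow>
     (\<exists>Bblack Bblue. Bblack \<subseteq> E \<and> Bblue \<subseteq> E \<and> Bblack \<inter> Bblue = {} \<and>
        (\<forall>e\<in>Bblack. kind e = Diffusive) \<and>
        (\<forall>e\<in>Bblue. kind e = BlueSolid \<or> kind e = Diffusive) \<and>
        contains_spanning_tree V ends Bblack \<and> contains_spanning_tree V ends Bblue)"

definition induced_edges :: "'e set \<Rightarrow> ('e \<Rightarrow> 'v set) \<Rightarrow> 'v set \<Rightarrow> 'e set" where
  "induced_edges E ends S = {e\<in>E. ends e \<subseteq> S}"

text \<open>Quotient graph G/S: molecules are Some v for v outside S, plus the new
molecule None; edges inside S are deleted; other edges keep their identity and
type, endpoints in S being redirected to None.\<close>
definition qmap :: "'v set \<Rightarrow> 'v \<Rightarrow> 'v option" where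
  "qmap S v = (if v \<in> S then None else Some v)"

definition quot_vertices :: "'v set \<Rightarrow> 'v set \<Rightarrow> 'v option set" where
  "quot_vertices V S = insert None (Some ` (V - S))"

definition quot_edges :: "'e set \<Rightarrow> ('e \<Rightarrow> 'v set) \<Rightarrow> 'v set \<Rightarrow> 'e set" where
  "quot_edges E ends S = {e\<in>E. \<not> ends e \<subseteq> S}"

definition quot_ends :: "('e \<Rightarrow> 'v set) \<Rightarrow> 'v set \<Rightarrow> 'e \<Rightarrow> 'v option set" where
  "quot_ends ends S e = qmap S ` ends e"

end

theory Submission
  imports Defs
begin

lemma cst_intro:
  "finite T \<Longrightarrow> (\<forall>e\<in>T. ends e \<subseteq> V) \<Longrightarrow> connected_by V ends T \<Longrightarrow> \<exists>T'\<subseteq>T. spanning_tree V ends T'"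
proof (induction "card T" arbitrary: T rule: less_induct)
  case less
  show ?case
  proof (cases "spanning_tree V ends T")
    case True then show ?thesis by blast
  next
    case False
    then obtain e where e: "e \<in> T" "connected_by V ends (T - {e})"
      using less.prems unfolding spanning_tree_def by blast
    have "card (T - {e}) < card T" using e less.prems(1) by (meson card_Diff1_less)
    then obtain T' where "T' \<subseteq> T - {e}" "spanning_tree V ends T'"
      using less.hyps[of "T - {e}"] less.prems e by auto
    then show ?thesis by blast
  qed
qed

lemma kind_any: "kind e = BlueSolid \<or> kind e = Diffusive"
  by (cases "kind e") auto

lemma dc_iff:
  assumes "finite E"
  shows "doubly_connected V E ends kind \<longleftrightarrow>
    (\<exists>T1 T2. T1 \<subseteq> E \<and> T2 \<subseteq> E \<and> T1 \<inter> T2 = {} \<and> (\<forall>e\<in>T1. kind e = Diffusive) \<and>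
       (\<forall>e\<in>T1 \<union> T2. ends e \<subseteq> V) \<and> connected_by V ends T1 \<and> connected_by V ends T2)"
proof
  assume "doubly_connected V E ends kind"
  then obtain B1 B2 where B: "B1 \<subseteq> E" "B2 \<subseteq> E" "B1 \<inter> B2 = {}" "\<forall>e\<in>B1. kind e = Diffusive"
    "contains_spanning_tree V ends B1" "contains_spanning_tree V ends B2"
    unfolding doubly_connected_def by blast
  obtain T1 where T1: "T1 \<subseteq> B1" "spanning_tree V ends T1"
    using B(5) unfolding contains_spanning_tree_def by blast
  obtain T2 where T2: "T2 \<subseteq> B2" "spanning_tree V ends T2"
    using B(6) unfolding contains_spanning_tree_def by blast
  have "T1 \<subseteq> E \<and> T2 \<subseteq> E \<and> T1 \<inter> T2 = {} \<and> (\<forall>e\<in>T1. kind e = Diffusive) \<and>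
       (\<forall>e\<in>T1 \<union> T2. ends e \<subseteq> V) \<and> connected_by V ends T1 \<and> connected_by V ends T2"
  proof (intro conjI)
    show "T1 \<subseteq> E" "T2 \<subseteq> E" using T1(1) T2(1) B(1,2) by auto
    show "T1 \<inter> T2 = {}" using T1(1) T2(1) B(3) by auto
    show "\<forall>e\<in>T1. kind e = Diffusive" using T1(1) B(4) by auto
    show "\<forall>e\<in>T1 \<union> T2. ends e \<subseteq> V" "connected_by V ends T1" "connected_by V ends T2"
      using T1(2) T2(2) unfolding spanning_tree_def by auto
  qed
  then show "\<exists>T1 T2. T1 \<subseteq> E \<and> T2 \<subseteq> E \<and> T1 \<inter> T2 = {} \<and> (\<forall>e\<in>T1. kind e = Diffusive) \<and>
       (\<forall>e\<in>T1 \<union> T2. ends e \<subseteq> V) \<and> connected_by V ends T1 \<and> connected_by V ends T2"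
    by blast
next
  assume "\<exists>T1 T2. T1 \<subseteq> E \<and> T2 \<subseteq> E \<and> T1 \<inter> T2 = {} \<and> (\<forall>e\<in>T1. kind e = Diffusive) \<and>
       (\<forall>e\<in>T1 \<union> T2. ends e \<subseteq> V) \<and> connected_by V ends T1 \<and> connected_by V ends T2"
  then obtain T1 T2 where t: "T1 \<subseteq> E" "T2 \<subseteq> E" "T1 \<inter> T2 = {}" "\<forall>e\<in>T1. kind e = Diffusive"
       "\<forall>e\<in>T1 \<union> T2. ends e \<subseteq> V" "connected_by V ends T1" "connected_by V ends T2" by blast
  have f: "finite T1" "finite T2" using t(1,2) assms finite_subset by blast+
  have c1: "contains_spanning_tree V ends T1"
    unfolding contains_spanning_tree_def using cst_intro[OF f(1)] t(5,6) by blast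
  have c2: "contains_spanning_tree V ends T2"
    unfolding contains_spanning_tree_def using cst_intro[OF f(2)] t(5,7) by blast
  have k: "\<forall>e\<in>T2. kind e = BlueSolid \<or> kind e = Diffusive" using kind_any[of kind] by blast
  show "doubly_connected V E ends kind"
    unfolding doubly_connected_def
    apply (rule exI[of _ T1])
    apply (rule exI[of _ T2])
    using t(1-4) c1 c2 k by simp
qed

lemma proj:
  assumes "(x, y) \<in> (adj ends T)\<^sup>*"
  shows "(qmap S x, qmap S y) \<in> (adj (quot_ends ends S) {e\<in>T. \<not> ends e \<subseteq> S})\<^sup>*"
  using assms
proof (induction rule: rtrancl_induct)
  case base then show ?case by simp
next
  case (step y z)
  then obtain e where e: "e \<in> T" "ends e = {y, z}" unfolding adj_def by blast
  show ?case
  proof (cases "y \<in> S \<and> z \<in> S")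
    case True
    then have "qmap S y = qmap S z" by (simp add: qmap_def)
    then show ?thesis using step.IH by simp
  next
    case False
    then have "e \<in> {e\<in>T. \<not> ends e \<subseteq> S}" "quot_ends ends S e = {qmap S y, qmap S z}"
      using e by (auto simp: quot_ends_def)
    then have "(qmap S y, qmap S z) \<in> adj (quot_ends ends S) {e\<in>T. \<not> ends e \<subseteq> S}"
      unfolding adj_def by blast
    then show ?thesis using step.IH by (meson rtrancl.rtrancl_into_rtrancl)
  qed
qed

lemma lift_base:
  assumes "connected_by S ends U" "U \<subseteq> T" "x \<in> V" "y \<in> V" "qmap S x = qmap S y"
  shows "(x, y) \<in> (adj ends T)\<^sup>*"
proof (cases "x \<in> S")
  case True
  then have "y \<in> S" using assms(5) by (auto simp: qmap_def split: if_splits)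
  then have "(x, y) \<in> (adj ends U)\<^sup>*" using True assms(1) unfolding connected_by_def by blast
  moreover have "adj ends U \<subseteq> adj ends T" using assms(2) unfolding adj_def by blast
  ultimately show ?thesis using rtrancl_mono by blast
next
  case False
  then have "x = y" using assms(5) by (auto simp: qmap_def split: if_splits)
  then show ?thesis by simp
qed

lemma lift:
  assumes "(a, b) \<in> (adj (quot_ends ends S) T')\<^sup>*"
    and U: "connected_by S ends U" "U \<subseteq> T" and T': "T' \<subseteq> T"
    and E: "\<forall>e\<in>T'. ends e \<subseteq> V \<and> card (ends e) = 2"
    and x: "x \<in> V" "qmap S x = a"
  shows "\<forall>y\<in>V. qmap S y = b \<longrightarrow> (x, y) \<in> (adj ends T)\<^sup>*"
  using assms(1)
proof (induction rule: rtrancl_induct)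
  case base
  then show ?case using lift_base[OF U] x by auto
next
  case (step b c)
  show ?case
  proof (intro ballI impI)
    fix y assume y: "y \<in> V" "qmap S y = c"
    from step.hyps(2) obtain e where e: "e \<in> T'" "quot_ends ends S e = {b, c}"
      unfolding adj_def by blast
    have c2: "card (ends e) = 2" using E e(1) by blast
    obtain p q where pq: "ends e = {p, q}" using c2 card_2_iff[of "ends e"] by blast
    have pqV: "p \<in> V" "q \<in> V" using E e(1) pq by auto
    have "{qmap S p, qmap S q} = {b, c}" using e(2) pq by (simp add: quot_ends_def)
    then have or: "(qmap S p = b \<and> qmap S q = c) \<or> (qmap S q = b \<and> qmap S p = c)"
      by (auto simp add: doubleton_eq_iff)
    obtain p' q' where pq': "ends e = {p', q'}" "p' \<in> V" "q' \<in> V" "qmap S p' = b" "qmap S q' = c"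
    proof (cases "qmap S p = b \<and> qmap S q = c")
      case True then show ?thesis using that[of p q] pq pqV by blast
    next
      case False
      then have "qmap S q = b \<and> qmap S p = c" using or by blast
      moreover have "ends e = {q, p}" using pq by blast
      ultimately show ?thesis using that[of q p] pqV by blast
    qed
    have "(p', q') \<in> adj ends T" using pq' e(1) T' unfolding adj_def by blast
    moreover have "(x, p') \<in> (adj ends T)\<^sup>*" using step.IH pq' by blast
    moreover have "(q', y) \<in> (adj ends T)\<^sup>*" using lift_base[OF U] pq' y by auto
    ultimately show "(x, y) \<in> (adj ends T)\<^sup>*"
      using rtrancl_into_rtrancl[of x p' "adj ends T" q'] rtrancl_trans[of x q' "adj ends T" y] by blast
  qed
qed

lemma qmap_in: "v \<in> V \<Longrightarrow> qmap S v \<in> quot_vertices V S"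
  by (auto simp: qmap_def quot_vertices_def)

lemma qv_pre: "S \<noteq> {} \<Longrightarrow> S \<subseteq> V \<Longrightarrow> a \<in> quot_vertices V S \<Longrightarrow> \<exists>v\<in>V. qmap S v = a"
  by (auto simp: qmap_def quot_vertices_def)

theorem claimA1:
  fixes V :: "'v set" and E :: "'e set" and ends :: "'e \<Rightarrow> 'v set"
    and kind :: "'e \<Rightarrow> edge_kind" and S :: "'v set"
  assumes "molecular_graph V E ends"
    and "S \<subseteq> V" and "S \<noteq> {}"
    and "doubly_connected S (induced_edges E ends S) ends kind"
  shows "doubly_connected V E ends kind \<longleftrightarrow>
         doubly_connected (quot_vertices V S) (quot_edges E ends S) (quot_ends ends S) kind"
proof -
  have fE: "finite E" and EV: "\<forall>e\<in>E. ends e \<subseteq> V \<and> card (ends e) = 2"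
    using assms(1) unfolding molecular_graph_def by auto
  have fI: "finite (induced_edges E ends S)" using fE unfolding induced_edges_def by simp
  have fQ: "finite (quot_edges E ends S)" using fE unfolding quot_edges_def by simp
  obtain U1 U2 where U: "U1 \<subseteq> induced_edges E ends S" "U2 \<subseteq> induced_edges E ends S" "U1 \<inter> U2 = {}"
    "\<forall>e\<in>U1. kind e = Diffusive" "connected_by S ends U1" "connected_by S ends U2"
    using assms(4) unfolding dc_iff[OF fI] by blast
  have qe_sub: "quot_ends ends S e \<subseteq> quot_vertices V S" if "e \<in> E" for e
  proof -
    have "ends e \<subseteq> V" using EV that by blast
    then show ?thesis unfolding quot_ends_def using qmap_in[of _ V S] by blast
  qed
  show ?thesis
  proof
    assume "doubly_connected V E ends kind"
    then obtain T1 T2 where T: "T1 \<subseteq> E" "T2 \<subseteq> E" "T1 \<inter> T2 = {}" "\<forall>e\<in>T1. kind e = Diffusive"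
       "\<forall>e\<in>T1 \<union> T2. ends e \<subseteq> V" "connected_by V ends T1" "connected_by V ends T2"
      using \<open>doubly_connected V E ends kind\<close> unfolding dc_iff[OF fE] by auto
    have cq: "connected_by (quot_vertices V S) (quot_ends ends S) {e\<in>T. \<not> ends e \<subseteq> S}"
      if "connected_by V ends T" for T
      unfolding connected_by_def
    proof (intro ballI)
      fix a b assume "a \<in> quot_vertices V S" "b \<in> quot_vertices V S"
      then obtain u v where "u \<in> V" "v \<in> V" "qmap S u = a" "qmap S v = b"
        using qv_pre[OF assms(3,2)] by meson
      then show "(a, b) \<in> (adj (quot_ends ends S) {e\<in>T. \<not> ends e \<subseteq> S})\<^sup>*"
        using proj[of u v ends T S] that \<open>u \<in> V\<close> \<open>v \<in> V\<close> unfolding connected_by_def by simp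
    qed
    show "doubly_connected (quot_vertices V S) (quot_edges E ends S) (quot_ends ends S) kind"
      unfolding dc_iff[OF fQ]
      apply (rule exI[of _ "{e\<in>T1. \<not> ends e \<subseteq> S}"])
      apply (rule exI[of _ "{e\<in>T2. \<not> ends e \<subseteq> S}"])
    proof (intro conjI)
      show "{e\<in>T1. \<not> ends e \<subseteq> S} \<subseteq> quot_edges E ends S" using T(1) unfolding quot_edges_def by blast
      show "{e\<in>T2. \<not> ends e \<subseteq> S} \<subseteq> quot_edges E ends S" using T(2) unfolding quot_edges_def by blast
      show "{e\<in>T1. \<not> ends e \<subseteq> S} \<inter> {e\<in>T2. \<not> ends e \<subseteq> S} = {}" using T(3) by blast
      show "\<forall>e\<in>{e\<in>T1. \<not> ends e \<subseteq> S}. kind e = Diffusive" using T(4) by blast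
      show "\<forall>e\<in>{e\<in>T1. \<not> ends e \<subseteq> S} \<union> {e\<in>T2. \<not> ends e \<subseteq> S}. quot_ends ends S e \<subseteq> quot_vertices V S"
      proof
        fix e assume "e \<in> {e\<in>T1. \<not> ends e \<subseteq> S} \<union> {e\<in>T2. \<not> ends e \<subseteq> S}"
        then have "e \<in> E" using T(1,2) by blast
        then show "quot_ends ends S e \<subseteq> quot_vertices V S" by (rule qe_sub)
      qed
      show "connected_by (quot_vertices V S) (quot_ends ends S) {e\<in>T1. \<not> ends e \<subseteq> S}" by (rule cq[OF T(6)])
      show "connected_by (quot_vertices V S) (quot_ends ends S) {e\<in>T2. \<not> ends e \<subseteq> S}" by (rule cq[OF T(7)])
    qed
  next
    assume "doubly_connected (quot_vertices V S) (quot_edges E ends S) (quot_ends ends S) kind"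
    then obtain T1 T2 where T: "T1 \<subseteq> quot_edges E ends S" "T2 \<subseteq> quot_edges E ends S"
       "T1 \<inter> T2 = {}" "\<forall>e\<in>T1. kind e = Diffusive"
       "connected_by (quot_vertices V S) (quot_ends ends S) T1"
       "connected_by (quot_vertices V S) (quot_ends ends S) T2"
      using \<open>doubly_connected (quot_vertices V S) (quot_edges E ends S) (quot_ends ends S) kind\<close>
      unfolding dc_iff[OF fQ] by auto
    have cl: "connected_by V ends (T \<union> U)"
      if "T \<subseteq> quot_edges E ends S" "connected_by (quot_vertices V S) (quot_ends ends S) T"
         "connected_by S ends U" for T U
      unfolding connected_by_def
    proof (intro ballI)
      fix x y assume xy: "x \<in> V" "y \<in> V"
      have qx: "qmap S x \<in> quot_vertices V S" using xy(1) by (rule qmap_in)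
      have qy: "qmap S y \<in> quot_vertices V S" using xy(2) by (rule qmap_in)
      have "(qmap S x, qmap S y) \<in> (adj (quot_ends ends S) T)\<^sup>*"
        using that(2) qx qy unfolding connected_by_def by blast
      moreover have "\<forall>e\<in>T. ends e \<subseteq> V \<and> card (ends e) = 2"
        using that(1) EV unfolding quot_edges_def by blast
      ultimately have "\<forall>y'\<in>V. qmap S y' = qmap S y \<longrightarrow> (x, y') \<in> (adj ends (T \<union> U))\<^sup>*"
        using lift[of "qmap S x" "qmap S y" ends S T U "T \<union> U" V x] that(3) xy(1) by blast
      then show "(x, y) \<in> (adj ends (T \<union> U))\<^sup>*" using xy(2) by blast
    qed
    show "doubly_connected V E ends kind"
      unfolding dc_iff[OF fE]
      apply (rule exI[of _ "T1 \<union> U1"])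
      apply (rule exI[of _ "T2 \<union> U2"])
    proof (intro conjI)
      show "T1 \<union> U1 \<subseteq> E" using T(1) U(1) unfolding quot_edges_def induced_edges_def by blast
      show "T2 \<union> U2 \<subseteq> E" using T(2) U(2) unfolding quot_edges_def induced_edges_def by blast
      show "(T1 \<union> U1) \<inter> (T2 \<union> U2) = {}"
      proof -
        have "T1 \<inter> U2 = {}" "U1 \<inter> T2 = {}"
          using T(1,2) U(1,2) unfolding quot_edges_def induced_edges_def by auto
        then show ?thesis using T(3) U(3) by blast
      qed
      show "\<forall>e\<in>T1 \<union> U1. kind e = Diffusive" using T(4) U(4) by blast
      show "\<forall>e\<in>(T1 \<union> U1) \<union> (T2 \<union> U2). ends e \<subseteq> V"
      proof
        fix e assume "e \<in> (T1 \<union> U1) \<union> (T2 \<union> U2)"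
        then have "e \<in> E" using T(1,2) U(1,2) unfolding quot_edges_def induced_edges_def by blast
        then show "ends e \<subseteq> V" using EV by blast
      qed
      show "connected_by V ends (T1 \<union> U1)" by (rule cl[OF T(1,5) U(5)])
      show "connected_by V ends (T2 \<union> U2)" by (rule cl[OF T(2,6) U(6)])
    qed
  qed
qed

end
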